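(* Let $D' \in \mathrm{Sym}_n(\mathbb{R}_{\geq 0})$ be a corrupted distance matrix. Then the Increase Only Metric Repair algorithm described below returns a perturbation $P$ with $0\preceq P$ such that $D'+P$ is metric, and it runs in time $O(n^3)$.
   Context: $\mathrm{Sym}_n(\mathbb{R}_{\geq 0})$ denotes the symmetric $n\times n$ matrices with nonnegative entries. $D$ is metric if $D_{ii}=0$ for all $i$ and $D_{ij}\le D_{ik}+D_{jk}$ for all $i,j,k$. $A\preceq B$ means entrywise $\le$. The Increase Only Metric Repair algorithm: set $\widehat{D}=D'$ (a symmetric matrix, updates being made symmetrically). For $k=1,\dots,n$, for $i=1,\dots,n$, for $j=1,\dots,i-1$: if $\widehat{D}_{ij} > \widehat{D}_{ik}+\widehat{D}_{kj}$, set $\widehat{D}_{ik}=\widehat{D}_{ki}=\widehat{D}_{ij}-\widehat{D}_{kj}$. Output $P=\widehat{D}-D'$. *)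

theory Defs
  imports Complex_Main
begin

text \<open>n x n matrices are represented as functions nat => nat => real, indices 0..n-1.\<close>

definition is_metric :: "nat \<Rightarrow> (nat \<Rightarrow> nat \<Rightarrow> real) \<Rightarrow> bool" where
  "is_metric n D \<longleftrightarrow> (\<forall>i<n. D i i = 0) \<and>
     (\<forall>i<n. \<forall>j<n. \<forall>k<n. D i j \<le> D i k + D j k)"

text \<open>One inner step of the algorithm for the triple (k,i,j); the state carries the
  current matrix and a counter of elementary steps executed (for the running time).\<close>
definition iomr_step :: "nat \<Rightarrow> nat \<Rightarrow> nat \<Rightarrow> (nat \<Rightarrow> nat \<Rightarrow> real) \<times> nat
    \<Rightarrow> (nat \<Rightarrow> nat \<Rightarrow> real) \<times> nat" where
  "iomr_step k i j S = (let D = fst S; c = snd S in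
     (if D i j > D i k + D k j
      then (let v = D i j - D k j in D(i := (D i)(k := v), k := (D k)(i := v)))
      else D, Suc c))"

definition iomr_run :: "nat \<Rightarrow> (nat \<Rightarrow> nat \<Rightarrow> real) \<Rightarrow> (nat \<Rightarrow> nat \<Rightarrow> real) \<times> nat" where
  "iomr_run n D' =
     foldl (\<lambda>S k. foldl (\<lambda>S' i. foldl (\<lambda>S'' j. iomr_step k i j S'') S' [0..<i]) S [0..<n])
       (D', 0) [0..<n]"

definition iomr_perturbation :: "nat \<Rightarrow> (nat \<Rightarrow> nat \<Rightarrow> real) \<Rightarrow> nat \<Rightarrow> nat \<Rightarrow> real" where
  "iomr_perturbation n D' = (\<lambda>i j. fst (iomr_run n D') i j - D' i j)"

definition iomr_cost :: "nat \<Rightarrow> (nat \<Rightarrow> nat \<Rightarrow> real) \<Rightarrow> nat" where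
  "iomr_cost n D' = snd (iomr_run n D')"

end

theory Submission
  imports Defs
begin

definition stp :: "nat \<Rightarrow> nat \<Rightarrow> nat \<Rightarrow> (nat \<Rightarrow> nat \<Rightarrow> real) \<Rightarrow> (nat \<Rightarrow> nat \<Rightarrow> real)" where
  "stp k i j D = fst (iomr_step k i j (D, 0))"

lemma fst_step: "fst (iomr_step k i j S) = stp k i j (fst S)"
  by (simp add: stp_def iomr_step_def Let_def)

lemma snd_step: "snd (iomr_step k i j S) = Suc (snd S)"
  by (simp add: iomr_step_def Let_def)

lemma stp_apply: "stp k i j D a b = (if D i j > D i k + D k j \<and> ((a = i \<and> b = k) \<or> (a = k \<and> b = i))
   then D i j - D k j else D a b)"
  by (auto simp: stp_def iomr_step_def Let_def)

definition blkF :: "nat \<Rightarrow> nat \<Rightarrow> (nat \<Rightarrow> nat \<Rightarrow> real) \<Rightarrow> (nat \<Rightarrow> nat \<Rightarrow> real)" where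
  "blkF k i D = foldl (\<lambda>D j. stp k i j D) D [0..<i]"

definition rndF :: "nat \<Rightarrow> nat \<Rightarrow> (nat \<Rightarrow> nat \<Rightarrow> real) \<Rightarrow> (nat \<Rightarrow> nat \<Rightarrow> real)" where
  "rndF n k D = foldl (\<lambda>D i. blkF k i D) D [0..<n]"

lemma fst_blk: "fst (foldl (\<lambda>S'' j. iomr_step k i j S'') S xs) = foldl (\<lambda>D j. stp k i j D) (fst S) xs"
  by (induction xs arbitrary: S) (auto simp: fst_step)

lemma fst_rnd: "fst (foldl (\<lambda>S' i. foldl (\<lambda>S'' j. iomr_step k i j S'') S' [0..<i]) S xs)
   = foldl (\<lambda>D i. blkF k i D) (fst S) xs"
  by (induction xs arbitrary: S) (auto simp: fst_blk blkF_def)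

lemma fst_run: "fst (iomr_run n D') = foldl (\<lambda>D k. rndF n k D) D' [0..<n]"
proof -
  have "\<And>S. fst (foldl (\<lambda>S k. foldl (\<lambda>S' i. foldl (\<lambda>S'' j. iomr_step k i j S'') S' [0..<i]) S [0..<n]) S xs)
     = foldl (\<lambda>D k. rndF n k D) (fst S) xs" for xs
    by (induction xs) (auto simp: fst_rnd rndF_def)
  then show ?thesis unfolding iomr_run_def by simp
qed

lemma snd_blk: "snd (foldl (\<lambda>S'' j. iomr_step k i j S'') S xs) = snd S + length xs"
  by (induction xs arbitrary: S) (auto simp: snd_step)

lemma snd_rnd: "\<forall>x\<in>set xs. x \<le> n \<Longrightarrow>
  snd (foldl (\<lambda>S' i. foldl (\<lambda>S'' j. iomr_step k i j S'') S' [0..<i]) S xs) \<le> snd S + length xs * n"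
proof (induction xs arbitrary: S)
  case Nil then show ?case by simp
next
  case (Cons x xs)
  let ?S = "foldl (\<lambda>S'' j. iomr_step k x j S'') S [0..<x]"
  have "snd ?S = snd S + x" by (simp add: snd_blk)
  moreover have "snd (foldl (\<lambda>S' i. foldl (\<lambda>S'' j. iomr_step k i j S'') S' [0..<i]) ?S xs) \<le> snd ?S + length xs * n"
    using Cons by auto
  ultimately show ?case using Cons.prems by auto
qed

lemma snd_run: "snd (foldl (\<lambda>S k. foldl (\<lambda>S' i. foldl (\<lambda>S'' j. iomr_step k i j S'') S' [0..<i]) S [0..<n]) S xs)
   \<le> snd S + length xs * (n * n)"
proof (induction xs arbitrary: S)
  case Nil then show ?case by simp
next
  case (Cons x xs)
  let ?S = "foldl (\<lambda>S' i. foldl (\<lambda>S'' j. iomr_step x i j S'') S' [0..<i]) S [0..<n]"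
  have "snd ?S \<le> snd S + n * n" using snd_rnd[of "[0..<n]" n x S] by auto
  then show ?case using Cons.IH[of ?S] by auto
qed

lemma cost_bound: "iomr_cost m E \<le> 1 * m ^ 3"
  using snd_run[of m "(E,0)" "[0..<m]"] unfolding iomr_cost_def iomr_run_def
  by (simp add: power3_eq_cube)

definition Inv :: "nat \<Rightarrow> nat \<Rightarrow> (nat \<Rightarrow> nat \<Rightarrow> real) \<Rightarrow> bool" where
  "Inv n k D \<longleftrightarrow> (\<forall>a<n. \<forall>b<n. D a b = D b a) \<and> (\<forall>a<n. D a a = 0) \<and> (\<forall>a<n. \<forall>b<n. 0 \<le> D a b)
     \<and> (\<forall>a<n. \<forall>b<n. \<forall>m<k. D a b \<le> D a m + D m b)"

lemma stp_kk: "Y k k = 0 \<Longrightarrow> stp k k j Y = Y"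
  by (rule ext, rule ext) (auto simp: stp_apply)

lemma foldl_kk: "Y k k = 0 \<Longrightarrow> foldl (\<lambda>D j. stp k k j D) Y xs = Y"
  by (induction xs) (auto simp: stp_kk)

lemma blk_inv:
  assumes pk: "p \<noteq> k" and Xkk: "X k k = 0" and XD: "\<forall>a b. a \<noteq> k \<longrightarrow> b \<noteq> k \<longrightarrow> X a b = D a b"
    and Xpk: "X p k = D p k" and Xsym: "X p k = X k p" and q: "q \<le> p"
  shows "let Y = foldl (\<lambda>Y j. stp k p j Y) X [0..<q] in
    (\<forall>a b. \<not>((a = p \<and> b = k) \<or> (a = k \<and> b = p)) \<longrightarrow> Y a b = X a b) \<and> Y p k = Y k p \<and> X p k \<le> Y p k
    \<and> (\<forall>b<q. D p b \<le> Y p k + Y k b) \<and> (Y p k = X p k \<or> (\<exists>j<q. j \<noteq> k \<and> Y p k = D p j - Y k j))"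
  using q
proof (induction q)
  case 0 then show ?case using Xsym by (simp add: Let_def)
next
  case (Suc q)
  define Y where "Y = foldl (\<lambda>Y j. stp k p j Y) X [0..<q]"
  have IH: "(\<forall>a b. \<not>((a = p \<and> b = k) \<or> (a = k \<and> b = p)) \<longrightarrow> Y a b = X a b) \<and> Y p k = Y k p \<and> X p k \<le> Y p k
    \<and> (\<forall>b<q. D p b \<le> Y p k + Y k b) \<and> (Y p k = X p k \<or> (\<exists>j<q. j \<noteq> k \<and> Y p k = D p j - Y k j))"
    using Suc.IH[OF Suc_leD[OF Suc.prems]] unfolding Y_def Let_def .
  have qp: "q < p" using Suc by simp
  have Ykk: "Y k k = 0" using IH Xkk pk by auto
  define Y' where "Y' = stp k p q Y"
  have Y'eq: "foldl (\<lambda>Y j. stp k p j Y) X [0..<Suc q] = Y'" unfolding Y'_def Y_def by simp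
  show ?case
  proof (cases "q = k")
    case True
    have "Y' = Y" unfolding Y'_def using True Ykk by (intro ext) (auto simp: stp_apply)
    then show ?thesis using IH True Ykk Xpk unfolding Y'eq Let_def
      by (auto simp: less_Suc_eq)
  next
    case qk: False
    have Ypq: "Y p q = D p q" using IH XD pk qk by auto
    have Ykq: "Y' k q = Y k q" "Y' q k = Y q k" using qp qk pk unfolding Y'_def by (auto simp: stp_apply)
    have frame: "\<forall>a b. \<not>((a = p \<and> b = k) \<or> (a = k \<and> b = p)) \<longrightarrow> Y' a b = Y a b"
      unfolding Y'_def by (auto simp: stp_apply)
    have kb: "\<forall>b. b \<noteq> p \<longrightarrow> Y' k b = Y k b" using frame pk by auto
    show ?thesis
    proof (cases "Y p q > Y p k + Y k q")
      case True
      have v: "Y' p k = D p q - Y k q" "Y' k p = D p q - Y k q"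
        unfolding Y'_def using True Ypq by (auto simp: stp_apply)
      have mono: "Y p k \<le> Y' p k" using True Ypq v by auto
      have B6: "\<forall>b<Suc q. D p b \<le> Y' p k + Y' k b"
      proof (intro allI impI)
        fix b assume "b < Suc q"
        then consider "b < q" | "b = q" by linarith
        then show "D p b \<le> Y' p k + Y' k b"
        proof cases
          case 1 then have "D p b \<le> Y p k + Y k b" using IH by auto
          moreover have "Y' k b = Y k b" using kb 1 qp by auto
          ultimately show ?thesis using mono by linarith
        next
          case 2 then show ?thesis using v Ykq by simp
        qed
      qed
      show ?thesis unfolding Y'eq Let_def
        using IH frame v mono B6 Ykq qk by (auto intro!: exI[of _ q])
    next
      case False
      have "Y' = Y" unfolding Y'_def using False by (intro ext) (auto simp: stp_apply)
      then show ?thesis using IH Ypq False unfolding Y'eq Let_def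
        by (auto simp: less_Suc_eq)
    qed
  qed
qed

definition RI :: "nat \<Rightarrow> nat \<Rightarrow> nat \<Rightarrow> (nat \<Rightarrow> nat \<Rightarrow> real) \<Rightarrow> (nat \<Rightarrow> nat \<Rightarrow> real) \<Rightarrow> bool" where
  "RI n k p D X \<longleftrightarrow> (\<forall>a b. a \<noteq> k \<longrightarrow> b \<noteq> k \<longrightarrow> X a b = D a b) \<and> X k k = 0
    \<and> (\<forall>a<n. X a k = X k a) \<and> (\<forall>a. p \<le> a \<longrightarrow> X a k = D a k) \<and> (\<forall>a<p. D a k \<le> X a k)
    \<and> (\<forall>a<p. \<forall>b<a. D a b \<le> X a k + X k b)
    \<and> (\<forall>a<p. X a k = D a k \<or> (\<exists>j<a. j \<noteq> k \<and> X a k = D a j - X k j))"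

lemma rnd_inv:
  assumes I: "Inv n k D" and kn: "k < n" and pn: "p \<le> n"
  shows "RI n k p D (foldl (\<lambda>D i. blkF k i D) D [0..<p])"
  using pn
proof (induction p)
  case 0
  then show ?case using I kn by (auto simp: RI_def Inv_def)
next
  case (Suc p)
  define X where "X = foldl (\<lambda>D i. blkF k i D) D [0..<p]"
  have R: "RI n k p D X" using Suc unfolding X_def by simp
  have R1: "\<forall>a b. a \<noteq> k \<longrightarrow> b \<noteq> k \<longrightarrow> X a b = D a b" and R2: "X k k = 0"
    and R3: "\<forall>a<n. X a k = X k a" and R4: "\<forall>a. p \<le> a \<longrightarrow> X a k = D a k" and R5: "\<forall>a<p. D a k \<le> X a k"
    and R6: "\<forall>a<p. \<forall>b<a. D a b \<le> X a k + X k b"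
    and R7: "\<forall>a<p. X a k = D a k \<or> (\<exists>j<a. j \<noteq> k \<and> X a k = D a j - X k j)"
    using R unfolding RI_def by blast+
  have pn: "p < n" using Suc by simp
  define X' where "X' = blkF k p X"
  have eq: "foldl (\<lambda>D i. blkF k i D) D [0..<Suc p] = X'" unfolding X'_def X_def by simp
  have Dsym: "\<forall>a<n. \<forall>b<n. D a b = D b a" and Dkk: "D k k = 0" using I kn by (auto simp: Inv_def)
  show ?case unfolding eq
  proof (cases "p = k")
    case True
    have "X' = X" unfolding X'_def blkF_def using True R by (simp add: foldl_kk RI_def)
    moreover have "\<forall>b<k. D k b \<le> X k k + X k b"
    proof (intro allI impI)
      fix b assume b: "b < k"
      have "D b k \<le> X b k" using R5 b True by auto
      moreover have "X b k = X k b" using R3 b kn by auto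
      moreover have "D k b = D b k" using Dsym b kn by auto
      moreover have "X k k = 0" using R2 by auto
      ultimately show "D k b \<le> X k k + X k b" by simp
    qed
    moreover have "\<forall>a<Suc p. D a k \<le> X a k" using R5 R2 Dkk True by (metis less_Suc_eq order_refl)
    moreover have "\<forall>a<Suc p. \<forall>b<a. D a b \<le> X a k + X k b" using R6 True \<open>\<forall>b<k. D k b \<le> X k k + X k b\<close>
      by (metis less_Suc_eq)
    moreover have "\<forall>a<Suc p. X a k = D a k \<or> (\<exists>j<a. j \<noteq> k \<and> X a k = D a j - X k j)"
      using R7 True R2 Dkk by (metis less_Suc_eq)
    moreover have "\<forall>a. Suc p \<le> a \<longrightarrow> X a k = D a k" using R4 by simp
    ultimately show "RI n k (Suc p) D X'" using R1 R2 R3 unfolding RI_def by simp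
  next
    case pk: False
    have Xkk: "X k k = 0" using R2 .
    have XD: "\<forall>a b. a \<noteq> k \<longrightarrow> b \<noteq> k \<longrightarrow> X a b = D a b" using R1 .
    have Xpk: "X p k = D p k" using R4 by simp
    have Xsym: "X p k = X k p" using R3 pn by simp
    have BB: "(\<forall>a b. \<not>((a = p \<and> b = k) \<or> (a = k \<and> b = p)) \<longrightarrow> X' a b = X a b) \<and> X' p k = X' k p \<and> X p k \<le> X' p k
    \<and> (\<forall>b<p. D p b \<le> X' p k + X' k b) \<and> (X' p k = X p k \<or> (\<exists>j<p. j \<noteq> k \<and> X' p k = D p j - X' k j))"
      using blk_inv[OF pk Xkk XD Xpk Xsym order_refl] unfolding X'_def blkF_def Let_def .
    note fr = BB[THEN conjunct1]
    note s = BB[THEN conjunct2, THEN conjunct1]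
    note m = BB[THEN conjunct2, THEN conjunct2, THEN conjunct1]
    note b6 = BB[THEN conjunct2, THEN conjunct2, THEN conjunct2, THEN conjunct1]
    note b7 = BB[THEN conjunct2, THEN conjunct2, THEN conjunct2, THEN conjunct2]
    have frk: "X' a b = X a b" if "\<not>((a = p \<and> b = k) \<or> (a = k \<and> b = p))" for a b
      using fr that by blast
    have c1: "\<forall>a b. a \<noteq> k \<longrightarrow> b \<noteq> k \<longrightarrow> X' a b = D a b"
    proof (intro allI impI)
      fix a b assume "a \<noteq> k" "b \<noteq> k"
      then show "X' a b = D a b" using frk[of a b] XD by simp
    qed
    have c2: "X' k k = 0" using frk[of k k] Xkk pk by simp
    have c3: "\<forall>a<n. X' a k = X' k a"
    proof (intro allI impI)
      fix a assume a: "a < n"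
      show "X' a k = X' k a"
      proof (cases "a = p")
        case True then show ?thesis using s by simp
      next
        case False then show ?thesis using frk[of a k] frk[of k a] R3 a by simp
      qed
    qed
    have c4: "\<forall>a. Suc p \<le> a \<longrightarrow> X' a k = D a k"
    proof (intro allI impI)
      fix a assume "Suc p \<le> a"
      then have "a \<noteq> p" "p \<le> a" by auto
      then show "X' a k = D a k" using frk[of a k] R4 by simp
    qed
    have c5: "\<forall>a<Suc p. D a k \<le> X' a k"
    proof (intro allI impI)
      fix a assume "a < Suc p"
      then consider "a = p" | "a < p" "a \<noteq> p" by linarith
      then show "D a k \<le> X' a k"
      proof cases
        case 1 then show ?thesis using m Xpk by simp
      next
        case 2 then show ?thesis using frk[of a k] R5 by simp
      qed
    qed
    have c6: "\<forall>a<Suc p. \<forall>b<a. D a b \<le> X' a k + X' k b"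
    proof (intro allI impI)
      fix a b assume a: "a < Suc p" and b: "b < a"
      show "D a b \<le> X' a k + X' k b"
      proof (cases "a = p")
        case True then show ?thesis using b6 b by auto
      next
        case False
        then have "a < p" using a by simp
        then have "D a b \<le> X a k + X k b" using R6 b by auto
        moreover have "X' a k = X a k" "X' k b = X k b" using frk[of a k] frk[of k b] False \<open>a < p\<close> b by auto
        ultimately show ?thesis by simp
      qed
    qed
    have c7: "\<forall>a<Suc p. X' a k = D a k \<or> (\<exists>j<a. j \<noteq> k \<and> X' a k = D a j - X' k j)"
    proof (intro allI impI)
      fix a assume a: "a < Suc p"
      show "X' a k = D a k \<or> (\<exists>j<a. j \<noteq> k \<and> X' a k = D a j - X' k j)"
      proof (cases "a = p")
        case True then show ?thesis using b7 Xpk by auto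
      next
        case False
        then have ap: "a < p" using a by simp
        then have h: "X a k = D a k \<or> (\<exists>j<a. j \<noteq> k \<and> X a k = D a j - X k j)" using R7 by auto
        have e: "X' a k = X a k" using frk[of a k] False by auto
        have "\<forall>j<a. X' k j = X k j" using frk ap by auto
        then show ?thesis using h e by auto
      qed
    qed
    show "RI n k (Suc p) D X'" unfolding RI_def using c1 c2 c3 c4 c5 c6 c7 by blast
  qed
qed

lemma rnd_step:
  assumes I: "Inv n k D" and kn: "k < n"
  shows "Inv n (Suc k) (rndF n k D) \<and> (\<forall>a<n. \<forall>b<n. D a b \<le> rndF n k D a b)"
proof -
  define X where "X = rndF n k D"
  have R: "RI n k n D X" using rnd_inv[OF I kn order_refl] unfolding X_def rndF_def .
  have R1: "\<forall>a b. a \<noteq> k \<longrightarrow> b \<noteq> k \<longrightarrow> X a b = D a b" and R2: "X k k = 0"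
    and R3: "\<forall>a<n. X a k = X k a" and R5: "\<forall>a<n. D a k \<le> X a k"
    and R6: "\<forall>a<n. \<forall>b<a. D a b \<le> X a k + X k b"
    and R7: "\<forall>a<n. X a k = D a k \<or> (\<exists>j<a. j \<noteq> k \<and> X a k = D a j - X k j)"
    using R unfolding RI_def by blast+
  have Dsym: "\<And>a b. a < n \<Longrightarrow> b < n \<Longrightarrow> D a b = D b a"
    and Ddiag: "\<And>a. a < n \<Longrightarrow> D a a = 0"
    and Dnn: "\<And>a b. a < n \<Longrightarrow> b < n \<Longrightarrow> 0 \<le> D a b"
    and Dtri: "\<And>a b m. a < n \<Longrightarrow> b < n \<Longrightarrow> m < k \<Longrightarrow> D a b \<le> D a m + D m b"
    using I unfolding Inv_def by blast+
  have XD: "\<And>a b. a \<noteq> k \<Longrightarrow> b \<noteq> k \<Longrightarrow> X a b = D a b" using R1 by blast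
  have X3: "\<And>a. a < n \<Longrightarrow> X a k = X k a" using R3 by blast
  have X5: "\<And>a. a < n \<Longrightarrow> D a k \<le> X a k" using R5 by blast
  have mono: "\<And>a b. a < n \<Longrightarrow> b < n \<Longrightarrow> D a b \<le> X a b"
  proof -
    fix a b assume a: "a < n" and b: "b < n"
    show "D a b \<le> X a b"
    proof (cases "a = k")
      case True then show ?thesis using X5[OF b] X3[OF b] Dsym[OF a b] by simp
    next
      case False
      show ?thesis
      proof (cases "b = k")
        case True then show ?thesis using X5[OF a] by simp
      next
        case False then show ?thesis using XD \<open>a \<noteq> k\<close> by simp
      qed
    qed
  qed
  have Xnn: "\<And>a b. a < n \<Longrightarrow> b < n \<Longrightarrow> 0 \<le> X a b" using mono Dnn by (meson order_trans)
  have Xsym: "\<And>a b. a < n \<Longrightarrow> b < n \<Longrightarrow> X a b = X b a"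
    using X3 XD Dsym by metis
  have Xdiag: "\<And>a. a < n \<Longrightarrow> X a a = 0" using R2 XD Ddiag by metis
  have T: "\<And>a b. a < n \<Longrightarrow> b < n \<Longrightarrow> X a b \<le> X a k + X k b"
  proof -
    fix a b assume a: "a < n" and b: "b < n"
    show "X a b \<le> X a k + X k b"
    proof (cases "a = k \<or> b = k")
      case True then show ?thesis using R2 by auto
    next
      case False
      then have ak: "a \<noteq> k" and bk: "b \<noteq> k" by auto
      consider "a = b" | "b < a" | "a < b" by linarith
      then show ?thesis
      proof cases
        case 1 then show ?thesis using XD[OF ak bk] Ddiag[OF a] Xnn[OF a kn] Xnn[OF kn b] by simp
      next
        case 2 then show ?thesis using XD[OF ak bk] R6 a by auto
      next
        case 3
        then have "D b a \<le> X b k + X k a" using R6 b by auto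
        then show ?thesis using XD[OF ak bk] Dsym[OF a b] X3[OF a] X3[OF b] by simp
      qed
    qed
  qed
  have G: "\<And>c m. c < n \<Longrightarrow> c \<noteq> k \<Longrightarrow> m < k \<Longrightarrow> X c k \<le> D c m + X m k"
  proof -
    fix c m assume c: "c < n" and ck: "c \<noteq> k" and mk: "m < k"
    have mn: "m < n" using mk kn by simp
    have mk': "m \<noteq> k" using mk by simp
    from R7 c consider "X c k = D c k" | j where "j < c" "j \<noteq> k" "X c k = D c j - X k j" by blast
    then show "X c k \<le> D c m + X m k"
    proof cases
      case 1
      then show ?thesis using Dtri[OF c kn mk] X5[OF mn] by simp
    next
      case 2
      have jn: "j < n" using 2 c by simp
      have "D c j \<le> D c m + D m j" using Dtri[OF c jn mk] .
      moreover have "D m j = X m j" using XD[OF mk' \<open>j \<noteq> k\<close>] by simp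
      moreover have "X m j \<le> X m k + X k j" using T[OF mn jn] .
      ultimately show ?thesis using 2 by simp
    qed
  qed
  have Tm: "\<And>a b m. a < n \<Longrightarrow> b < n \<Longrightarrow> m < k \<Longrightarrow> X a b \<le> X a m + X m b"
  proof -
    fix a b m assume a: "a < n" and b: "b < n" and mk: "m < k"
    have mn: "m < n" using mk kn by simp
    have mk': "m \<noteq> k" using mk by simp
    show "X a b \<le> X a m + X m b"
    proof (cases "a = k")
      case True
      show ?thesis
      proof (cases "b = k")
        case True then show ?thesis using \<open>a = k\<close> R2 Xnn[OF kn mn] Xnn[OF mn kn] by simp
      next
        case bk: False
        have "X b k \<le> D b m + X m k" using G[OF b bk mk] .
        moreover have "D b m = X m b" using XD[OF mk' bk] Dsym[OF b mn] by simp
        ultimately show ?thesis using True X3[OF b] X3[OF mn] by simp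
      qed
    next
      case ak: False
      show ?thesis
      proof (cases "b = k")
        case True
        have "X a k \<le> D a m + X m k" using G[OF a ak mk] .
        then show ?thesis using True XD[OF ak mk'] by simp
      next
        case bk: False
        then show ?thesis using XD[OF ak bk] XD[OF ak mk'] XD[OF mk' bk] Dtri[OF a b mk] by simp
      qed
    qed
  qed
  have "Inv n (Suc k) X" unfolding Inv_def
  proof (intro conjI allI impI)
    fix a b assume "a < n" "b < n" then show "X a b = X b a" using Xsym by blast
  next
    fix a assume "a < n" then show "X a a = 0" using Xdiag by blast
  next
    fix a b assume "a < n" "b < n" then show "0 \<le> X a b" using Xnn by blast
  next
    fix a b m assume a: "a < n" and b: "b < n" and m: "m < Suc k"
    then consider "m = k" | "m < k" by linarith
    then show "X a b \<le> X a m + X m b"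
    proof cases
      case 1 then show ?thesis using T[OF a b] by simp
    next
      case 2 then show ?thesis using Tm[OF a b] by simp
    qed
  qed
  then show ?thesis using mono unfolding X_def by blast
qed

lemma run_inv: "Inv n 0 D \<Longrightarrow> p \<le> n \<Longrightarrow>
   Inv n p (foldl (\<lambda>D k. rndF n k D) D [0..<p]) \<and> (\<forall>a<n. \<forall>b<n. D a b \<le> foldl (\<lambda>D k. rndF n k D) D [0..<p] a b)"
proof (induction p)
  case 0 then show ?case by simp
next
  case (Suc p)
  then have IH: "Inv n p (foldl (\<lambda>D k. rndF n k D) D [0..<p])"
    "\<forall>a<n. \<forall>b<n. D a b \<le> foldl (\<lambda>D k. rndF n k D) D [0..<p] a b" by auto
  have "p < n" using Suc by simp
  note st = rnd_step[OF IH(1) this]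
  have "\<forall>a<n. \<forall>b<n. D a b \<le> rndF n p (foldl (\<lambda>D k. rndF n k D) D [0..<p]) a b"
    using st IH(2) by (meson order_trans)
  then show ?case using st by simp
qed

theorem mainTheorem4:
  fixes n :: nat and D' :: "nat \<Rightarrow> nat \<Rightarrow> real"
  assumes sym: "\<forall>i<n. \<forall>j<n. D' i j = D' j i"
    and nonneg: "\<forall>i<n. \<forall>j<n. 0 \<le> D' i j"
    and diag: "\<forall>i<n. D' i i = 0"
  shows "(\<forall>i<n. \<forall>j<n. 0 \<le> iomr_perturbation n D' i j)
    \<and> is_metric n (\<lambda>i j. D' i j + iomr_perturbation n D' i j)
    \<and> (\<exists>C::nat. \<forall>m (E :: nat \<Rightarrow> nat \<Rightarrow> real). iomr_cost m E \<le> C * m ^ 3)"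
proof -
  have I0: "Inv n 0 D'" using sym nonneg diag unfolding Inv_def by auto
  define X where "X = fst (iomr_run n D')"
  have RX: "Inv n n X \<and> (\<forall>a<n. \<forall>b<n. D' a b \<le> X a b)"
    using run_inv[OF I0 order_refl] unfolding X_def fst_run .
  have P: "iomr_perturbation n D' = (\<lambda>i j. X i j - D' i j)"
    unfolding iomr_perturbation_def X_def by simp
  have eq: "(\<lambda>i j. D' i j + iomr_perturbation n D' i j) = X" unfolding P by simp
  have 1: "\<forall>i<n. \<forall>j<n. 0 \<le> iomr_perturbation n D' i j" using RX unfolding P by auto
  have 2: "is_metric n X" using RX unfolding is_metric_def Inv_def by metis
  have 3: "\<exists>C::nat. \<forall>m (E :: nat \<Rightarrow> nat \<Rightarrow> real). iomr_cost m E \<le> C * m ^ 3"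
    using cost_bound by blast
  show ?thesis using 1 2 3 unfolding eq by blast
qed

end
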